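(* Let $0<\epsilon<\frac13$ and consider the 4-player instance in which $[0,1]$ is partitioned into 14 consecutive nondegenerate intervals, from left to right $J_1,J_2,J_3,J_4,\,I,\,J_5,J_6,J_7,J_8,\,J_9,\,K_1,K_2,K_3,K_4$, with nonatomic valuations: player 4 gives value $\frac14$ to each of $J_1,J_5,K_1,K_4$; player 3 gives $\frac{1-\epsilon}{3}$ to each of $J_3,J_7,J_9$ and $\epsilon$ to $I$; player 1 gives $\frac{1+\epsilon}{4}$ to each of $J_2,J_4$ and $\frac{1-\epsilon}{2}$ to $K_2$; player 2 gives $\frac{1+\epsilon}{4}$ to each of $J_6,J_8$ and $\frac{1-\epsilon}{2}$ to $K_3$. Then the partial division that discards $I$ and gives player 1 the interval $J_1\cup J_2\cup J_3\cup J_4$ (the first block, as one interval), player 2 the interval $J_5\cup\dots\cup J_8$, player 3 the interval $J_9$, and player 4 the interval $K_1\cup K_2\cup K_3\cup K_4$, is envy-free and has egalitarian welfare $\frac{1-\epsilon}{3}$. Consequently (together with the fact that every envy-free complete division of this instance has egalitarian welfare at most $\frac14$), this instance exhibits an egalitarian $\frac{4(1-\epsilon)}{3}$-dumping paradox.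
   Context: A (connected) division for players $1,\dots,n$ of the cake $[0,1]$ is a sequence $(X_1,\dots,X_n)$ of pairwise disjoint open intervals (possibly empty), $X_i$ being player $i$'s piece; it is complete if the union of the closures of the $X_i$ equals $[0,1]$, and partial otherwise. Each player $i$ has a valuation $v_i$, a nonatomic probability measure on $[0,1]$; $u_i(x,j)=v_i(X_j)$. A division is envy-free if $u_i(x,i)\ge u_i(x,j)$ for all $i,j$. Egalitarian welfare: $eg(x)=\min_i u_i(x,i)$. For $\alpha>1$, an instance exhibits an egalitarian $\alpha$-dumping paradox if there is an envy-free partial division $y$ with $eg(y)\ge\alpha\,eg(x)$ for every envy-free complete division $x$. *)

theory Defs
  imports "HOL-Probability.Probability"
begin

definition valuation :: "real measure \<Rightarrow> bool" where
  "valuation M \<longleftrightarrow> prob_space M \<and> space M = {0..1}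
     \<and> sets M = sets (restrict_space borel {0..1::real})
     \<and> (\<forall>x. emeasure M {x} = 0)"

definition division :: "nat \<Rightarrow> (nat \<Rightarrow> real set) \<Rightarrow> bool" where
  "division n X \<longleftrightarrow>
     (\<forall>i\<in>{1..n}. \<exists>a b. 0 \<le> a \<and> a \<le> b \<and> b \<le> 1 \<and> X i = {a<..<b})
     \<and> (\<forall>i\<in>{1..n}. \<forall>j\<in>{1..n}. i \<noteq> j \<longrightarrow> X i \<inter> X j = {})"

definition complete_division :: "nat \<Rightarrow> (nat \<Rightarrow> real set) \<Rightarrow> bool" where
  "complete_division n X \<longleftrightarrow> division n X \<and> (\<Union>i\<in>{1..n}. closure (X i)) = {0..1}"

definition partial_division :: "nat \<Rightarrow> (nat \<Rightarrow> real set) \<Rightarrow> bool" where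
  "partial_division n X \<longleftrightarrow> division n X \<and> \<not> complete_division n X"

definition util :: "(nat \<Rightarrow> real measure) \<Rightarrow> (nat \<Rightarrow> real set) \<Rightarrow> nat \<Rightarrow> nat \<Rightarrow> real" where
  "util v X i j = measure (v i) (X j)"

definition envy_free :: "(nat \<Rightarrow> real measure) \<Rightarrow> nat \<Rightarrow> (nat \<Rightarrow> real set) \<Rightarrow> bool" where
  "envy_free v n X \<longleftrightarrow> (\<forall>i\<in>{1..n}. \<forall>j\<in>{1..n}. util v X i i \<ge> util v X i j)"

definition eg :: "(nat \<Rightarrow> real measure) \<Rightarrow> nat \<Rightarrow> (nat \<Rightarrow> real set) \<Rightarrow> real" where
  "eg v n X = Min ((\<lambda>i. util v X i i) ` {1..n})"

definition egal_dumping_paradox :: "(nat \<Rightarrow> real measure) \<Rightarrow> nat \<Rightarrow> real \<Rightarrow> bool" where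
  "egal_dumping_paradox v n \<alpha> \<longleftrightarrow>
     (\<exists>y. partial_division n y \<and> envy_free v n y \<and>
        (\<forall>x. complete_division n x \<and> envy_free v n x \<longrightarrow> eg v n y \<ge> \<alpha> * eg v n x))"

end

theory Submission
  imports Defs
begin

lemma val_sets: assumes "valuation M" "A \<subseteq> {0..1}" "A \<in> sets borel" shows "A \<in> sets M"
proof -
  have "sets M = sets (restrict_space borel {0..1::real})" using assms(1) unfolding valuation_def by auto
  moreover have "A \<in> sets (restrict_space borel {0..1::real})"
    using assms(2,3) by (subst sets_restrict_space_iff) auto
  ultimately show ?thesis by simp
qed

lemma val_split:
  assumes M: "valuation M" and ab: "0 \<le> a" "a \<le> b" "b \<le> 1"
  shows "measure M {a<..<b} = measure M {0<..<b} - measure M {0<..<a}"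
proof (cases "a = 0 \<or> a = b")
  case True then show ?thesis by auto
next
  case False
  then have a0: "0 < a" "a < b" using ab by auto
  interpret prob_space M using M unfolding valuation_def by auto
  have s1: "{0<..<a} \<in> sets M" "{a<..<b} \<in> sets M" "{a} \<in> sets M"
    using ab by (auto intro!: val_sets[OF M])
  have n: "{a} \<in> null_sets M" using s1(3) M unfolding valuation_def by (auto simp: null_sets_def)
  have eq: "{0<..<b} = ({0<..<a} \<union> {a<..<b}) \<union> {a}" using a0 ab by auto
  have "measure M {0<..<b} = measure M ({0<..<a} \<union> {a<..<b})"
    unfolding eq using s1 n by (intro measure_Un_null_set) auto
  also have "\<dots> = measure M {0<..<a} + measure M {a<..<b}"
    using s1 by (intro finite_measure_Union) auto
  finally show ?thesis by simp
qed

lemma val_total: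
  assumes M: "valuation M" shows "measure M {0<..<1} = 1"
proof -
  interpret prob_space M using M unfolding valuation_def by auto
  have s1: "{0<..<1::real} \<in> sets M" "{0::real} \<in> sets M" "{1::real} \<in> sets M"
    by (auto intro!: val_sets[OF M])
  have n: "{0::real} \<in> null_sets M" "{1::real} \<in> null_sets M" using s1 M unfolding valuation_def by (auto simp: null_sets_def)
  have eq: "{0..1::real} = ({0<..<1} \<union> {0}) \<union> {1}" by auto
  have "1 = measure M {0..1::real}" using M prob_space unfolding valuation_def by auto
  also have "\<dots> = measure M ({0<..<1} \<union> {0})"
    unfolding eq using s1 n by (intro measure_Un_null_set val_sets[OF M]) auto
  also have "\<dots> = measure M {0<..<1}"
    using s1 n by (intro measure_Un_null_set) auto
  finally show ?thesis by simp
qed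


lemma div4:
  assumes "\<And>j. j \<in> {1..4} \<Longrightarrow> X j = {s j<..<t j}"
    and "\<And>j. j \<in> {1..4} \<Longrightarrow> 0 \<le> s j \<and> s j \<le> t j \<and> t j \<le> 1"
    and "\<And>j k. j \<in> {1..4} \<Longrightarrow> k \<in> {1..4} \<Longrightarrow> j \<noteq> k \<Longrightarrow> t j \<le> s k \<or> t k \<le> s j"
  shows "division 4 X"
  unfolding division_def
proof (intro conjI ballI impI)
  fix i :: nat assume i: "i \<in> {1..4}"
  show "\<exists>a b. 0 \<le> a \<and> a \<le> b \<and> b \<le> 1 \<and> X i = {a<..<b}"
    using assms(1,2)[OF i] by blast
next
  fix i j :: nat assume h: "i \<in> {1..4}" "j \<in> {1..4}" "i \<noteq> j"
  show "X i \<inter> X j = {}" using assms(1)[OF h(1)] assms(1)[OF h(2)] assms(3)[OF h] by auto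
qed

lemma notclos: "u < s \<or> t < (u::real) \<Longrightarrow> u \<notin> closure {s<..<t}"
proof -
  assume h: "u < s \<or> t < u"
  have "closure {s<..<t} \<subseteq> {s..t}" by (rule closure_minimal) auto
  then show ?thesis using h by auto
qed

lemma notcomp:
  assumes "0 \<le> u" "u \<le> 1" "\<And>j. j \<in> {1..4} \<Longrightarrow> u \<notin> closure (X j)"
  shows "\<not> complete_division 4 X"
  using assms unfolding complete_division_def by (metis UN_E atLeastAtMost_iff)

lemma core:
  fixes e :: real and p :: "nat \<Rightarrow> real" and F :: "nat \<Rightarrow> real \<Rightarrow> real"
    and a b :: "nat \<Rightarrow> real"
  assumes eps: "0 < e" "e < 1/3"
    and tab: "F 1 (p 0) = 0"
    "F 1 (p 1) = 0"
    "F 1 (p 2) = 1/4+e/4"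
    "F 1 (p 3) = 1/4+e/4"
    "F 1 (p 4) = 1/2+e/2"
    "F 1 (p 5) = 1/2+e/2"
    "F 1 (p 6) = 1/2+e/2"
    "F 1 (p 7) = 1/2+e/2"
    "F 1 (p 8) = 1/2+e/2"
    "F 1 (p 9) = 1/2+e/2"
    "F 1 (p 10) = 1/2+e/2"
    "F 1 (p 11) = 1/2+e/2"
    "F 1 (p 12) = 1"
    "F 1 (p 13) = 1"
    "F 1 (p 14) = 1"
    "F 2 (p 0) = 0"
    "F 2 (p 1) = 0"
    "F 2 (p 2) = 0"
    "F 2 (p 3) = 0"
    "F 2 (p 4) = 0"
    "F 2 (p 5) = 0"
    "F 2 (p 6) = 0"
    "F 2 (p 7) = 1/4+e/4"
    "F 2 (p 8) = 1/4+e/4"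
    "F 2 (p 9) = 1/2+e/2"
    "F 2 (p 10) = 1/2+e/2"
    "F 2 (p 11) = 1/2+e/2"
    "F 2 (p 12) = 1/2+e/2"
    "F 2 (p 13) = 1"
    "F 2 (p 14) = 1"
    "F 3 (p 0) = 0"
    "F 3 (p 1) = 0"
    "F 3 (p 2) = 0"
    "F 3 (p 3) = 1/3-e/3"
    "F 3 (p 4) = 1/3-e/3"
    "F 3 (p 5) = 1/3+2*e/3"
    "F 3 (p 6) = 1/3+2*e/3"
    "F 3 (p 7) = 1/3+2*e/3"
    "F 3 (p 8) = 2/3+e/3"
    "F 3 (p 9) = 2/3+e/3"
    "F 3 (p 10) = 1"
    "F 3 (p 11) = 1"
    "F 3 (p 12) = 1"
    "F 3 (p 13) = 1"
    "F 3 (p 14) = 1"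
    "F 4 (p 0) = 0"
    "F 4 (p 1) = 1/4"
    "F 4 (p 2) = 1/4"
    "F 4 (p 3) = 1/4"
    "F 4 (p 4) = 1/4"
    "F 4 (p 5) = 1/4"
    "F 4 (p 6) = 1/2"
    "F 4 (p 7) = 1/2"
    "F 4 (p 8) = 1/2"
    "F 4 (p 9) = 1/2"
    "F 4 (p 10) = 1/2"
    "F 4 (p 11) = 3/4"
    "F 4 (p 12) = 3/4"
    "F 4 (p 13) = 3/4"
    "F 4 (p 14) = 1"
    and pm: "p 0 = 0" "p 14 = 1"
    and pmono: "p 0 \<le> p 1" "p 1 \<le> p 2" "p 2 \<le> p 3" "p 3 \<le> p 4" "p 4 \<le> p 5" "p 5 \<le> p 6" "p 6 \<le> p 7"
     "p 7 \<le> p 8" "p 8 \<le> p 9" "p 9 \<le> p 10" "p 10 \<le> p 11" "p 11 \<le> p 12" "p 12 \<le> p 13" "p 13 \<le> p 14"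
    and mono: "\<And>i s t. 0 \<le> s \<Longrightarrow> s \<le> t \<Longrightarrow> t \<le> 1 \<Longrightarrow> F i s \<le> F i t"
    and ab: "\<And>j. j \<in> {1..4} \<Longrightarrow> 0 \<le> a j \<and> a j \<le> b j \<and> b j \<le> 1"
    and disj: "\<And>j k. j \<in> {1..4} \<Longrightarrow> k \<in> {1..4} \<Longrightarrow> j \<noteq> k \<Longrightarrow>
                 a j = b j \<or> a k = b k \<or> b j \<le> a k \<or> b k \<le> a j"
    and cov: "\<And>t. 0 \<le> t \<Longrightarrow> t \<le> 1 \<Longrightarrow> \<exists>j\<in>{1..4}. a j < b j \<and> a j \<le> t \<and> t \<le> b j"
    and ef: "\<And>i j. i \<in> {1..4} \<Longrightarrow> j \<in> {1..4} \<Longrightarrow> F i (b j) - F i (a j) \<le> F i (b i) - F i (a i)"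
    and own1: "\<And>i. i \<in> {1..4} \<Longrightarrow> F i (b i) - F i (a i) > 1/4"
    and own2: "\<And>i. i \<in> {1..4} \<Longrightarrow> F i (b i) - F i (a i) > e"
  shows False
proof -
  have a1: "0 \<le> a 1" "a 1 \<le> b 1" "b 1 \<le> 1" using ab[of 1] by auto
  have a2: "0 \<le> a 2" "a 2 \<le> b 2" "b 2 \<le> 1" using ab[of 2] by auto
  have a3: "0 \<le> a 3" "a 3 \<le> b 3" "b 3 \<le> 1" using ab[of 3] by auto
  have a4: "0 \<le> a 4" "a 4 \<le> b 4" "b 4 \<le> 1" using ab[of 4] by auto
  have o1: "F 1 (b 1) - F 1 (a 1) > 1/4" "F 2 (b 2) - F 2 (a 2) > 1/4"
     "F 3 (b 3) - F 3 (a 3) > e" "F 4 (b 4) - F 4 (a 4) > 1/4"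
    using own1[of 1] own1[of 2] own2[of 3] own1[of 4] by auto
  have ne: "a 1 < b 1" "a 2 < b 2" "a 3 < b 3" "a 4 < b 4"
    using o1 a1(2) a2(2) a3(2) a4(2) eps by (metis diff_self less_le less_irrefl order_less_trans zero_less_divide_1_iff zero_less_numeral)+
  have d: "\<And>j k. j \<in> {1..4} \<Longrightarrow> k \<in> {1..4} \<Longrightarrow> j \<noteq> k \<Longrightarrow> a j < b j \<Longrightarrow> a k < b k \<Longrightarrow> b j \<le> a k \<or> b k \<le> a j"
  proof -
    fix j k assume "j \<in> {1..4}" "k \<in> {1..4}" "j \<noteq> k" "a j < b j" "a k < b k"
    then show "b j \<le> a k \<or> b k \<le> a j" using disj[of j k] by auto
  qed
  have d41: "b 4 \<le> a 1 \<or> b 1 \<le> a 4" using d[of 4 1] ne by auto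
  have d42: "b 4 \<le> a 2 \<or> b 2 \<le> a 4" using d[of 4 2] ne by auto
  have d12: "b 1 \<le> a 2 \<or> b 2 \<le> a 1" using d[of 1 2] ne by auto
  have d31: "b 3 \<le> a 1 \<or> b 1 \<le> a 3" using d[of 3 1] ne by auto
  have d32: "b 3 \<le> a 2 \<or> b 2 \<le> a 3" using d[of 3 2] ne by auto
  have e14: "F 1 (b 4) - F 1 (a 4) \<le> F 1 (b 1) - F 1 (a 1)" using ef[of 1 4] by auto
  have e24: "F 2 (b 4) - F 2 (a 4) \<le> F 2 (b 2) - F 2 (a 2)" using ef[of 2 4] by auto
  have e31: "F 3 (b 1) - F 3 (a 1) \<le> F 3 (b 3) - F 3 (a 3)" using ef[of 3 1] by auto
  have e32: "F 3 (b 2) - F 3 (a 2) \<le> F 3 (b 3) - F 3 (a 3)" using ef[of 3 2] by auto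

  note T = tab
  have pp: "p 0 \<le> p 1" "p 1 \<le> p 2" "p 2 \<le> p 3" "p 3 \<le> p 4" "p 4 \<le> p 5" "p 5 \<le> p 6" "p 6 \<le> p 7"
     "p 7 \<le> p 8" "p 8 \<le> p 9" "p 9 \<le> p 10" "p 10 \<le> p 11" "p 11 \<le> p 12" "p 12 \<le> p 13" "p 13 \<le> p 14"
    using pmono by auto
  have b45: "b 4 > p 5"
  proof (rule ccontr)
    assume "\<not> b 4 > p 5"
    then have "F 4 (b 4) \<le> F 4 (p 5)" using mono[of "b 4" "p 5" 4] a4 pp pm a1 a2 a3 a4 by linarith
    moreover have "F 4 (p 0) \<le> F 4 (a 4)" using mono[of "p 0" "a 4" 4] a4 pm a1 a2 a3 a4 by linarith
    ultimately show False using o1 T by linarith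
  qed
  have a411: "a 4 < p 11"
  proof (rule ccontr)
    assume "\<not> a 4 < p 11"
    then have "F 4 (p 11) \<le> F 4 (a 4)" using mono[of "p 11" "a 4" 4] a4 pp pm a1 a2 a3 a4 by linarith
    moreover have "F 4 (b 4) \<le> F 4 (p 14)" using mono[of "b 4" "p 14" 4] a4 pm a1 a2 a3 a4 by linarith
    ultimately show False using o1 T by linarith
  qed
  show False
  proof (cases "a 4 < p 1")
    case True
    have "F 1 (p 5) - F 1 (p 1) \<le> F 1 (b 4) - F 1 (a 4)"
      using mono[of "a 4" "p 1" 1] mono[of "p 5" "b 4" 1] True b45 a4 pp pm a1 a2 a3 a4 by linarith
    then have big: "F 1 (b 1) - F 1 (a 1) \<ge> 1/2+e/2" using e14 T by linarith
    from d41 show False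
    proof
      assume h: "b 4 \<le> a 1"
      have "F 1 (p 5) \<le> F 1 (a 1)" using mono[of "p 5" "a 1" 1] h b45 a1 pp pm a1 a2 a3 a4 by linarith
      moreover have "F 1 (b 1) \<le> F 1 (p 14)" using mono[of "b 1" "p 14" 1] a1 pm a1 a2 a3 a4 by linarith
      ultimately show False using big T eps by linarith
    next
      assume h: "b 1 \<le> a 4"
      have "F 1 (b 1) \<le> F 1 (p 1)" using mono[of "b 1" "p 1" 1] h True a1 pp pm a1 a2 a3 a4 by linarith
      moreover have "F 1 (p 0) \<le> F 1 (a 1)" using mono[of "p 0" "a 1" 1] a1 pm a1 a2 a3 a4 by linarith
      ultimately show False using big T eps by linarith
    qed
  next
    case nA1: False
    have b410: "b 4 > p 10"
    proof (rule ccontr)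
      assume "\<not> b 4 > p 10"
      then have "F 4 (b 4) \<le> F 4 (p 10)" using mono[of "b 4" "p 10" 4] a4 pp pm a1 a2 a3 a4 by linarith
      moreover have "F 4 (p 1) \<le> F 4 (a 4)" using mono[of "p 1" "a 4" 4] nA1 pp pm a1 a2 a3 a4 by linarith
      ultimately show False using o1 T by linarith
    qed
    show False
    proof (cases "a 4 < p 6")
      case True
      have "F 2 (p 10) - F 2 (p 6) \<le> F 2 (b 4) - F 2 (a 4)"
        using mono[of "a 4" "p 6" 2] mono[of "p 10" "b 4" 2] True b410 a4 pp pm a1 a2 a3 a4 by linarith
      then have big: "F 2 (b 2) - F 2 (a 2) \<ge> 1/2+e/2" using e24 T by linarith
      from d42 show False
      proof
        assume h: "b 4 \<le> a 2"
        have "F 2 (p 10) \<le> F 2 (a 2)" using mono[of "p 10" "a 2" 2] h b410 a2 pp pm a1 a2 a3 a4 by linarith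
        moreover have "F 2 (b 2) \<le> F 2 (p 14)" using mono[of "b 2" "p 14" 2] a2 pm a1 a2 a3 a4 by linarith
        ultimately show False using big T eps by linarith
      next
        assume h: "b 2 \<le> a 4"
        have "F 2 (b 2) \<le> F 2 (p 6)" using mono[of "b 2" "p 6" 2] h True a2 pp pm a1 a2 a3 a4 by linarith
        moreover have "F 2 (p 0) \<le> F 2 (a 2)" using mono[of "p 0" "a 2" 2] a2 pm a1 a2 a3 a4 by linarith
        ultimately show False using big T eps by linarith
      qed
    next
      case nA2: False
      have b413: "b 4 > p 13"
      proof (rule ccontr)
        assume "\<not> b 4 > p 13"
        then have "F 4 (b 4) \<le> F 4 (p 13)" using mono[of "b 4" "p 13" 4] a4 pp pm a1 a2 a3 a4 by linarith
        moreover have "F 4 (p 6) \<le> F 4 (a 4)" using mono[of "p 6" "a 4" 4] nA2 pp pm a1 a2 a3 a4 by linarith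
        ultimately show False using o1 T by linarith
      qed
      have "F 1 (p 13) - F 1 (p 11) \<le> F 1 (b 4) - F 1 (a 4)"
        using mono[of "a 4" "p 11" 1] mono[of "p 13" "b 4" 1] a411 b413 a4 pp pm a1 a2 a3 a4 by linarith
      then have big1: "F 1 (b 1) - F 1 (a 1) \<ge> 1/2-e/2" using e14 T by linarith
      have "F 2 (p 13) - F 2 (p 11) \<le> F 2 (b 4) - F 2 (a 4)"
        using mono[of "a 4" "p 11" 2] mono[of "p 13" "b 4" 2] a411 b413 a4 pp pm a1 a2 a3 a4 by linarith
      then have big2: "F 2 (b 2) - F 2 (a 2) \<ge> 1/2-e/2" using e24 T by linarith
      have b1a4: "b 1 \<le> a 4"
      proof (rule ccontr)
        assume "\<not> b 1 \<le> a 4"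
        then have h: "b 4 \<le> a 1" using d41 by linarith
        have "F 1 (p 13) \<le> F 1 (a 1)" using mono[of "p 13" "a 1" 1] h b413 a1 pp pm a1 a2 a3 a4 by linarith
        moreover have "F 1 (b 1) \<le> F 1 (p 14)" using mono[of "b 1" "p 14" 1] a1 pm a1 a2 a3 a4 by linarith
        ultimately show False using big1 T eps by linarith
      qed
      have b2a4: "b 2 \<le> a 4"
      proof (rule ccontr)
        assume "\<not> b 2 \<le> a 4"
        then have h: "b 4 \<le> a 2" using d42 by linarith
        have "F 2 (p 13) \<le> F 2 (a 2)" using mono[of "p 13" "a 2" 2] h b413 a2 pp pm a1 a2 a3 a4 by linarith
        moreover have "F 2 (b 2) \<le> F 2 (p 14)" using mono[of "b 2" "p 14" 2] a2 pm a1 a2 a3 a4 by linarith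
        ultimately show False using big2 T eps by linarith
      qed
      have b13: "b 1 > p 3"
      proof (rule ccontr)
        assume "\<not> b 1 > p 3"
        then have "F 1 (b 1) \<le> F 1 (p 3)" using mono[of "b 1" "p 3" 1] a1 pp pm a1 a2 a3 a4 by linarith
        moreover have "F 1 (p 0) \<le> F 1 (a 1)" using mono[of "p 0" "a 1" 1] a1 pm a1 a2 a3 a4 by linarith
        ultimately show False using big1 T eps by linarith
      qed
      have a12: "a 1 < p 2"
      proof (rule ccontr)
        assume "\<not> a 1 < p 2"
        then have "F 1 (p 2) \<le> F 1 (a 1)" using mono[of "p 2" "a 1" 1] a1 pp pm a1 a2 a3 a4 by linarith
        moreover have "F 1 (b 1) \<le> F 1 (p 11)" using mono[of "b 1" "p 11" 1] b1a4 a411 a1 a4 pp pm a1 a2 a3 a4 by linarith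
        ultimately show False using big1 T eps by linarith
      qed
      have b28: "b 2 > p 8"
      proof (rule ccontr)
        assume "\<not> b 2 > p 8"
        then have "F 2 (b 2) \<le> F 2 (p 8)" using mono[of "b 2" "p 8" 2] a2 pp pm a1 a2 a3 a4 by linarith
        moreover have "F 2 (p 0) \<le> F 2 (a 2)" using mono[of "p 0" "a 2" 2] a2 pm a1 a2 a3 a4 by linarith
        ultimately show False using big2 T eps by linarith
      qed
      have a27: "a 2 < p 7"
      proof (rule ccontr)
        assume "\<not> a 2 < p 7"
        then have "F 2 (p 7) \<le> F 2 (a 2)" using mono[of "p 7" "a 2" 2] a2 pp pm a1 a2 a3 a4 by linarith
        moreover have "F 2 (b 2) \<le> F 2 (p 11)" using mono[of "b 2" "p 11" 2] b2a4 a411 a2 a4 pp pm a1 a2 a3 a4 by linarith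
        ultimately show False using big2 T eps by linarith
      qed
      have b1a2: "b 1 \<le> a 2" using d12 b28 a12 pp by linarith
      have "F 3 (p 3) - F 3 (p 2) \<le> F 3 (b 1) - F 3 (a 1)"
        using mono[of "a 1" "p 2" 3] mono[of "p 3" "b 1" 3] a12 b13 a1 pp pm a1 a2 a3 a4 by linarith
      then have big3: "F 3 (b 3) - F 3 (a 3) \<ge> 1/3-e/3" using e31 T by linarith
      have a3b1: "b 1 \<le> a 3"
      proof (rule ccontr)
        assume "\<not> b 1 \<le> a 3"
        then have h: "b 3 \<le> a 1" using d31 by linarith
        have "F 3 (b 3) \<le> F 3 (p 2)" using mono[of "b 3" "p 2" 3] h a12 a3 a1 pp pm a1 a2 a3 a4 by linarith
        moreover have "F 3 (p 0) \<le> F 3 (a 3)" using mono[of "p 0" "a 3" 3] a3 pm a1 a2 a3 a4 by linarith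
        ultimately show False using o1 T eps by linarith
      qed
      have a3b2: "b 2 \<le> a 3"
      proof (rule ccontr)
        assume "\<not> b 2 \<le> a 3"
        then have h: "b 3 \<le> a 2" using d32 by linarith
        have "F 3 (b 3) \<le> F 3 (p 7)" using mono[of "b 3" "p 7" 3] h a27 a3 a2 pp pm a1 a2 a3 a4 by linarith
        moreover have "F 3 (p 3) \<le> F 3 (a 3)" using mono[of "p 3" "a 3" 3] a3b1 b13 a1 pp pm a1 a2 a3 a4 by linarith
        ultimately show False using o1 T eps by linarith
      qed
      have small3: "F 3 (b 3) - F 3 (a 3) \<le> 1/3-e/3"
      proof -
        have "F 3 (p 8) \<le> F 3 (a 3)" using mono[of "p 8" "a 3" 3] a3b2 b28 a3 pp pm a1 a2 a3 a4 by linarith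
        moreover have "F 3 (b 3) \<le> F 3 (p 14)" using mono[of "b 3" "p 14" 3] a3 pm a1 a2 a3 a4 by linarith
        ultimately show ?thesis using T by linarith
      qed
      have eq: "b 1 = a 2"
      proof (rule ccontr)
        assume "b 1 \<noteq> a 2"
        then have lt: "b 1 < a 2" using b1a2 by linarith
        define t where "t = b 1 / 2 + a 2 / 2"
        have t0: "0 \<le> t" using lt a1 a2 unfolding t_def by linarith
        have t1: "t \<le> 1" using lt a1 a2 unfolding t_def by linarith
        obtain j where j: "j \<in> {1..4}" "a j < b j" "a j \<le> t" "t \<le> b j" using cov[OF t0 t1] by blast
        have "j = 1 \<or> j = 2 \<or> j = 3 \<or> j = 4" using j(1) by auto
        then show False using j lt a3b2 b2a4 a2 unfolding t_def by auto
      qed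
      have "F 3 (p 8) - F 3 (p 2) \<le> F 3 (b 2) - F 3 (a 1)"
        using mono[of "a 1" "p 2" 3] mono[of "p 8" "b 2" 3] a12 b28 a1 a2 pp pm a1 a2 a3 a4 by linarith
      moreover have "F 3 (b 1) = F 3 (a 2)" using eq by simp
      ultimately show False using e31 e32 small3 T eps by linarith
    qed
  qed
qed

theorem lemma5:
  fixes \<epsilon> :: real and p :: "nat \<Rightarrow> real" and v :: "nat \<Rightarrow> real measure"
    and y :: "nat \<Rightarrow> real set"
  assumes eps: "0 < \<epsilon>" "\<epsilon> < 1/3"
    and p0: "p 0 = 0" and p14: "p 14 = 1"
    and pmono: "\<forall>k<14. p k < p (Suc k)"
    and val: "\<forall>i\<in>{1..4}. valuation (v i)"
    \<comment> \<open>intervals, left to right: J1=(p0,p1) J2 J3 J4 I=(p4,p5) J5=(p5,p6) J6 J7 J8 J9=(p9,p10) K1=(p10,p11) K2 K3 K4=(p13,p14)\<close>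
    and v4: "measure (v 4) {p 0<..<p 1} = 1/4" "measure (v 4) {p 5<..<p 6} = 1/4"
            "measure (v 4) {p 10<..<p 11} = 1/4" "measure (v 4) {p 13<..<p 14} = 1/4"
    and v3: "measure (v 3) {p 2<..<p 3} = (1-\<epsilon>)/3" "measure (v 3) {p 7<..<p 8} = (1-\<epsilon>)/3"
            "measure (v 3) {p 9<..<p 10} = (1-\<epsilon>)/3" "measure (v 3) {p 4<..<p 5} = \<epsilon>"
    and v1: "measure (v 1) {p 1<..<p 2} = (1+\<epsilon>)/4" "measure (v 1) {p 3<..<p 4} = (1+\<epsilon>)/4"
            "measure (v 1) {p 11<..<p 12} = (1-\<epsilon>)/2"
    and v2: "measure (v 2) {p 6<..<p 7} = (1+\<epsilon>)/4" "measure (v 2) {p 8<..<p 9} = (1+\<epsilon>)/4"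
            "measure (v 2) {p 12<..<p 13} = (1-\<epsilon>)/2"
    and y: "y 1 = {p 0<..<p 4}" "y 2 = {p 5<..<p 9}" "y 3 = {p 9<..<p 10}" "y 4 = {p 10<..<p 14}"
  shows "partial_division 4 y \<and> envy_free v 4 y \<and> eg v 4 y = (1-\<epsilon>)/3
         \<and> egal_dumping_paradox v 4 (4*(1-\<epsilon>)/3)"
proof -
  define F where "F i t = (if i \<in> {1..4::nat} then measure (v i) {0<..<t} else 0)" for i t
  have meas: "\<And>i s t. i \<in> {1..4} \<Longrightarrow> 0 \<le> s \<Longrightarrow> s \<le> t \<Longrightarrow> t \<le> 1 \<Longrightarrow> measure (v i) {s<..<t} = F i t - F i s"
  proof -
    fix i :: nat and s t :: real assume h: "i \<in> {1..4}" "0 \<le> s" "s \<le> t" "t \<le> 1"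
    have V: "valuation (v i)" using val h(1) by blast
    show "measure (v i) {s<..<t} = F i t - F i s"
      unfolding F_def using h(1) val_split[OF V h(2-4)] by simp
  qed
  have mono: "\<And>i s t. 0 \<le> s \<Longrightarrow> s \<le> t \<Longrightarrow> t \<le> 1 \<Longrightarrow> F i s \<le> F i t"
  proof -
    fix i :: nat and s t :: real assume h: "0 \<le> s" "s \<le> t" "t \<le> 1"
    show "F i s \<le> F i t"
    proof (cases "i \<in> {1..4}")
      case True
      then have "measure (v i) {s<..<t} = F i t - F i s" using meas h by blast
      moreover have "measure (v i) {s<..<t} \<ge> 0" by simp
      ultimately show ?thesis by linarith
    next
      case False
      then have "F i s = 0" "F i t = 0" unfolding F_def by auto
      then show ?thesis by simp
    qed
  qed
  have F0: "\<And>i. F i 0 = 0" by (simp add: F_def)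
  have F1: "\<And>i. i \<in> {1..4} \<Longrightarrow> F i 1 = 1"
  proof -
    fix i :: nat assume h: "i \<in> {1..4}"
    have V: "valuation (v i)" using val h(1) by blast
    show "F i 1 = 1" unfolding F_def using h val_total[OF V] by simp
  qed
  have pl0: "p 0 < p 1" using pmono[rule_format, of 0] by (simp add: eval_nat_numeral)
  have pl1: "p 1 < p 2" using pmono[rule_format, of 1] by (simp add: eval_nat_numeral)
  have pl2: "p 2 < p 3" using pmono[rule_format, of 2] by (simp add: eval_nat_numeral)
  have pl3: "p 3 < p 4" using pmono[rule_format, of 3] by (simp add: eval_nat_numeral)
  have pl4: "p 4 < p 5" using pmono[rule_format, of 4] by (simp add: eval_nat_numeral)
  have pl5: "p 5 < p 6" using pmono[rule_format, of 5] by (simp add: eval_nat_numeral)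
  have pl6: "p 6 < p 7" using pmono[rule_format, of 6] by (simp add: eval_nat_numeral)
  have pl7: "p 7 < p 8" using pmono[rule_format, of 7] by (simp add: eval_nat_numeral)
  have pl8: "p 8 < p 9" using pmono[rule_format, of 8] by (simp add: eval_nat_numeral)
  have pl9: "p 9 < p 10" using pmono[rule_format, of 9] by (simp add: eval_nat_numeral)
  have pl10: "p 10 < p 11" using pmono[rule_format, of 10] by (simp add: eval_nat_numeral)
  have pl11: "p 11 < p 12" using pmono[rule_format, of 11] by (simp add: eval_nat_numeral)
  have pl12: "p 12 < p 13" using pmono[rule_format, of 12] by (simp add: eval_nat_numeral)
  have pl13: "p 13 < p 14" using pmono[rule_format, of 13] by (simp add: eval_nat_numeral)
  have pp: "p 0 \<le> p 1" "p 1 \<le> p 2" "p 2 \<le> p 3" "p 3 \<le> p 4" "p 4 \<le> p 5" "p 5 \<le> p 6" "p 6 \<le> p 7" "p 7 \<le> p 8" "p 8 \<le> p 9" "p 9 \<le> p 10" "p 10 \<le> p 11" "p 11 \<le> p 12" "p 12 \<le> p 13" "p 13 \<le> p 14" using pl0 pl1 pl2 pl3 pl4 pl5 pl6 pl7 pl8 pl9 pl10 pl11 pl12 pl13 by linarith+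
  have pa: "p 0 \<le> p 1" "p 0 \<le> p 2" "p 0 \<le> p 3" "p 0 \<le> p 4" "p 0 \<le> p 5" "p 0 \<le> p 6" "p 0 \<le> p 7" "p 0 \<le> p 8" "p 0 \<le> p 9" "p 0 \<le> p 10" "p 0 \<le> p 11" "p 0 \<le> p 12" "p 0 \<le> p 13" "p 0 \<le> p 14" "p 1 \<le> p 2" "p 1 \<le> p 3" "p 1 \<le> p 4" "p 1 \<le> p 5" "p 1 \<le> p 6" "p 1 \<le> p 7" "p 1 \<le> p 8" "p 1 \<le> p 9" "p 1 \<le> p 10" "p 1 \<le> p 11" "p 1 \<le> p 12" "p 1 \<le> p 13" "p 1 \<le> p 14" "p 2 \<le> p 3" "p 2 \<le> p 4" "p 2 \<le> p 5" "p 2 \<le> p 6" "p 2 \<le> p 7" "p 2 \<le> p 8" "p 2 \<le> p 9" "p 2 \<le> p 10" "p 2 \<le> p 11" "p 2 \<le> p 12" "p 2 \<le> p 13" "p 2 \<le> p 14" "p 3 \<le> p 4" "p 3 \<le> p 5" "p 3 \<le> p 6" "p 3 \<le> p 7" "p 3 \<le> p 8" "p 3 \<le> p 9" "p 3 \<le> p 10" "p 3 \<le> p 11" "p 3 \<le> p 12" "p 3 \<le> p 13" "p 3 \<le> p 14" "p 4 \<le> p 5" "p 4 \<le> p 6" "p 4 \<le> p 7" "p 4 \<le> p 8" "p 4 \<le> p 9" "p 4 \<le> p 10" "p 4 \<le> p 11" "p 4 \<le> p 12" "p 4 \<le> p 13" "p 4 \<le> p 14" "p 5 \<le> p 6" "p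 5 \<le> p 7" "p 5 \<le> p 8" "p 5 \<le> p 9" "p 5 \<le> p 10" "p 5 \<le> p 11" "p 5 \<le> p 12" "p 5 \<le> p 13" "p 5 \<le> p 14" "p 6 \<le> p 7" "p 6 \<le> p 8" "p 6 \<le> p 9" "p 6 \<le> p 10" "p 6 \<le> p 11" "p 6 \<le> p 12" "p 6 \<le> p 13" "p 6 \<le> p 14" "p 7 \<le> p 8" "p 7 \<le> p 9" "p 7 \<le> p 10" "p 7 \<le> p 11" "p 7 \<le> p 12" "p 7 \<le> p 13" "p 7 \<le> p 14" "p 8 \<le> p 9" "p 8 \<le> p 10" "p 8 \<le> p 11" "p 8 \<le> p 12" "p 8 \<le> p 13" "p 8 \<le> p 14" "p 9 \<le> p 10" "p 9 \<le> p 11" "p 9 \<le> p 12" "p 9 \<le> p 13" "p 9 \<le> p 14" "p 10 \<le> p 11" "p 10 \<le> p 12" "p 10 \<le> p 13" "p 10 \<le> p 14" "p 11 \<le> p 12" "p 11 \<le> p 13" "p 11 \<le> p 14" "p 12 \<le> p 13" "p 12 \<le> p 14" "p 13 \<le> p 14" using pp by linarith+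
  have pr: "0 \<le> p 0" "p 0 \<le> 1" "0 \<le> p 1" "p 1 \<le> 1" "0 \<le> p 2" "p 2 \<le> 1" "0 \<le> p 3" "p 3 \<le> 1" "0 \<le> p 4" "p 4 \<le> 1" "0 \<le> p 5" "p 5 \<le> 1" "0 \<le> p 6" "p 6 \<le> 1" "0 \<le> p 7" "p 7 \<le> 1" "0 \<le> p 8" "p 8 \<le> 1" "0 \<le> p 9" "p 9 \<le> 1" "0 \<le> p 10" "p 10 \<le> 1" "0 \<le> p 11" "p 11 \<le> 1" "0 \<le> p 12" "p 12 \<le> 1" "0 \<le> p 13" "p 13 \<le> 1" "0 \<le> p 14" "p 14 \<le> 1" using pp p0 p14 by linarith+
  have m1: "\<And>s t. 0 \<le> s \<Longrightarrow> s \<le> t \<Longrightarrow> t \<le> 1 \<Longrightarrow> measure (v 1) {s<..<t} = F 1 t - F 1 s" using meas[of 1] by simp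
  have mo1: "F 1 (p 0) \<le> F 1 (p 1)" "F 1 (p 1) \<le> F 1 (p 2)" "F 1 (p 2) \<le> F 1 (p 3)" "F 1 (p 3) \<le> F 1 (p 4)" "F 1 (p 4) \<le> F 1 (p 5)" "F 1 (p 5) \<le> F 1 (p 6)" "F 1 (p 6) \<le> F 1 (p 7)" "F 1 (p 7) \<le> F 1 (p 8)" "F 1 (p 8) \<le> F 1 (p 9)" "F 1 (p 9) \<le> F 1 (p 10)" "F 1 (p 10) \<le> F 1 (p 11)" "F 1 (p 11) \<le> F 1 (p 12)" "F 1 (p 12) \<le> F 1 (p 13)" "F 1 (p 13) \<le> F 1 (p 14)"
    using pr pp by (auto intro!: mono)
  have ends1: "F 1 (p 0) = 0" "F 1 (p 14) = 1" using F0 F1[of 1] p0 p14 by auto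
  have dd1_0: "F 1 (p 2) - F 1 (p 1) = 1/4+\<epsilon>/4"
    using v1(1) m1[of "p 1" "p 2"] pr pp by (simp add: add_divide_distrib diff_divide_distrib)
  have dd1_1: "F 1 (p 4) - F 1 (p 3) = 1/4+\<epsilon>/4"
    using v1(2) m1[of "p 3" "p 4"] pr pp by (simp add: add_divide_distrib diff_divide_distrib)
  have dd1_2: "F 1 (p 12) - F 1 (p 11) = 1/2-\<epsilon>/2"
    using v1(3) m1[of "p 11" "p 12"] pr pp by (simp add: add_divide_distrib diff_divide_distrib)
  note dd1 = dd1_0 dd1_1 dd1_2
  have tab1: "F 1 (p 0) = 0" "F 1 (p 1) = 0" "F 1 (p 2) = 1/4+\<epsilon>/4" "F 1 (p 3) = 1/4+\<epsilon>/4" "F 1 (p 4) = 1/2+\<epsilon>/2" "F 1 (p 5) = 1/2+\<epsilon>/2" "F 1 (p 6) = 1/2+\<epsilon>/2" "F 1 (p 7) = 1/2+\<epsilon>/2" "F 1 (p 8) = 1/2+\<epsilon>/2" "F 1 (p 9) = 1/2+\<epsilon>/2" "F 1 (p 10) = 1/2+\<epsilon>/2" "F 1 (p 11) = 1/2+\<epsilon>/2" "F 1 (p 12) = 1" "F 1 (p 13) = 1" "F 1 (p 14) = 1"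
    using mo1 ends1 dd1 eps by linarith+
  have m2: "\<And>s t. 0 \<le> s \<Longrightarrow> s \<le> t \<Longrightarrow> t \<le> 1 \<Longrightarrow> measure (v 2) {s<..<t} = F 2 t - F 2 s" using meas[of 2] by simp
  have mo2: "F 2 (p 0) \<le> F 2 (p 1)" "F 2 (p 1) \<le> F 2 (p 2)" "F 2 (p 2) \<le> F 2 (p 3)" "F 2 (p 3) \<le> F 2 (p 4)" "F 2 (p 4) \<le> F 2 (p 5)" "F 2 (p 5) \<le> F 2 (p 6)" "F 2 (p 6) \<le> F 2 (p 7)" "F 2 (p 7) \<le> F 2 (p 8)" "F 2 (p 8) \<le> F 2 (p 9)" "F 2 (p 9) \<le> F 2 (p 10)" "F 2 (p 10) \<le> F 2 (p 11)" "F 2 (p 11) \<le> F 2 (p 12)" "F 2 (p 12) \<le> F 2 (p 13)" "F 2 (p 13) \<le> F 2 (p 14)"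
    using pr pp by (auto intro!: mono)
  have ends2: "F 2 (p 0) = 0" "F 2 (p 14) = 1" using F0 F1[of 2] p0 p14 by auto
  have dd2_0: "F 2 (p 7) - F 2 (p 6) = 1/4+\<epsilon>/4"
    using v2(1) m2[of "p 6" "p 7"] pr pp by (simp add: add_divide_distrib diff_divide_distrib)
  have dd2_1: "F 2 (p 9) - F 2 (p 8) = 1/4+\<epsilon>/4"
    using v2(2) m2[of "p 8" "p 9"] pr pp by (simp add: add_divide_distrib diff_divide_distrib)
  have dd2_2: "F 2 (p 13) - F 2 (p 12) = 1/2-\<epsilon>/2"
    using v2(3) m2[of "p 12" "p 13"] pr pp by (simp add: add_divide_distrib diff_divide_distrib)
  note dd2 = dd2_0 dd2_1 dd2_2
  have tab2: "F 2 (p 0) = 0" "F 2 (p 1) = 0" "F 2 (p 2) = 0" "F 2 (p 3) = 0" "F 2 (p 4) = 0" "F 2 (p 5) = 0" "F 2 (p 6) = 0" "F 2 (p 7) = 1/4+\<epsilon>/4" "F 2 (p 8) = 1/4+\<epsilon>/4" "F 2 (p 9) = 1/2+\<epsilon>/2" "F 2 (p 10) = 1/2+\<epsilon>/2" "F 2 (p 11) = 1/2+\<epsilon>/2" "F 2 (p 12) = 1/2+\<epsilon>/2" "F 2 (p 13) = 1" "F 2 (p 14) = 1"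
    using mo2 ends2 dd2 eps by linarith+
  have m3: "\<And>s t. 0 \<le> s \<Longrightarrow> s \<le> t \<Longrightarrow> t \<le> 1 \<Longrightarrow> measure (v 3) {s<..<t} = F 3 t - F 3 s" using meas[of 3] by simp
  have mo3: "F 3 (p 0) \<le> F 3 (p 1)" "F 3 (p 1) \<le> F 3 (p 2)" "F 3 (p 2) \<le> F 3 (p 3)" "F 3 (p 3) \<le> F 3 (p 4)" "F 3 (p 4) \<le> F 3 (p 5)" "F 3 (p 5) \<le> F 3 (p 6)" "F 3 (p 6) \<le> F 3 (p 7)" "F 3 (p 7) \<le> F 3 (p 8)" "F 3 (p 8) \<le> F 3 (p 9)" "F 3 (p 9) \<le> F 3 (p 10)" "F 3 (p 10) \<le> F 3 (p 11)" "F 3 (p 11) \<le> F 3 (p 12)" "F 3 (p 12) \<le> F 3 (p 13)" "F 3 (p 13) \<le> F 3 (p 14)"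
    using pr pp by (auto intro!: mono)
  have ends3: "F 3 (p 0) = 0" "F 3 (p 14) = 1" using F0 F1[of 3] p0 p14 by auto
  have dd3_0: "F 3 (p 3) - F 3 (p 2) = 1/3-\<epsilon>/3"
    using v3(1) m3[of "p 2" "p 3"] pr pp by (simp add: add_divide_distrib diff_divide_distrib)
  have dd3_1: "F 3 (p 8) - F 3 (p 7) = 1/3-\<epsilon>/3"
    using v3(2) m3[of "p 7" "p 8"] pr pp by (simp add: add_divide_distrib diff_divide_distrib)
  have dd3_2: "F 3 (p 10) - F 3 (p 9) = 1/3-\<epsilon>/3"
    using v3(3) m3[of "p 9" "p 10"] pr pp by (simp add: add_divide_distrib diff_divide_distrib)
  have dd3_3: "F 3 (p 5) - F 3 (p 4) = \<epsilon>"
    using v3(4) m3[of "p 4" "p 5"] pr pp by (simp add: add_divide_distrib diff_divide_distrib)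
  note dd3 = dd3_0 dd3_1 dd3_2 dd3_3
  have tab3: "F 3 (p 0) = 0" "F 3 (p 1) = 0" "F 3 (p 2) = 0" "F 3 (p 3) = 1/3-\<epsilon>/3" "F 3 (p 4) = 1/3-\<epsilon>/3" "F 3 (p 5) = 1/3+2*\<epsilon>/3" "F 3 (p 6) = 1/3+2*\<epsilon>/3" "F 3 (p 7) = 1/3+2*\<epsilon>/3" "F 3 (p 8) = 2/3+\<epsilon>/3" "F 3 (p 9) = 2/3+\<epsilon>/3" "F 3 (p 10) = 1" "F 3 (p 11) = 1" "F 3 (p 12) = 1" "F 3 (p 13) = 1" "F 3 (p 14) = 1"
    using mo3 ends3 dd3 eps by linarith+
  have m4: "\<And>s t. 0 \<le> s \<Longrightarrow> s \<le> t \<Longrightarrow> t \<le> 1 \<Longrightarrow> measure (v 4) {s<..<t} = F 4 t - F 4 s" using meas[of 4] by simp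
  have mo4: "F 4 (p 0) \<le> F 4 (p 1)" "F 4 (p 1) \<le> F 4 (p 2)" "F 4 (p 2) \<le> F 4 (p 3)" "F 4 (p 3) \<le> F 4 (p 4)" "F 4 (p 4) \<le> F 4 (p 5)" "F 4 (p 5) \<le> F 4 (p 6)" "F 4 (p 6) \<le> F 4 (p 7)" "F 4 (p 7) \<le> F 4 (p 8)" "F 4 (p 8) \<le> F 4 (p 9)" "F 4 (p 9) \<le> F 4 (p 10)" "F 4 (p 10) \<le> F 4 (p 11)" "F 4 (p 11) \<le> F 4 (p 12)" "F 4 (p 12) \<le> F 4 (p 13)" "F 4 (p 13) \<le> F 4 (p 14)"
    using pr pp by (auto intro!: mono)
  have ends4: "F 4 (p 0) = 0" "F 4 (p 14) = 1" using F0 F1[of 4] p0 p14 by auto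
  have dd4_0: "F 4 (p 1) - F 4 (p 0) = 1/4"
    using v4(1) m4[of "p 0" "p 1"] pr pp by (simp add: add_divide_distrib diff_divide_distrib)
  have dd4_1: "F 4 (p 6) - F 4 (p 5) = 1/4"
    using v4(2) m4[of "p 5" "p 6"] pr pp by (simp add: add_divide_distrib diff_divide_distrib)
  have dd4_2: "F 4 (p 11) - F 4 (p 10) = 1/4"
    using v4(3) m4[of "p 10" "p 11"] pr pp by (simp add: add_divide_distrib diff_divide_distrib)
  have dd4_3: "F 4 (p 14) - F 4 (p 13) = 1/4"
    using v4(4) m4[of "p 13" "p 14"] pr pp by (simp add: add_divide_distrib diff_divide_distrib)
  note dd4 = dd4_0 dd4_1 dd4_2 dd4_3
  have tab4: "F 4 (p 0) = 0" "F 4 (p 1) = 1/4" "F 4 (p 2) = 1/4" "F 4 (p 3) = 1/4" "F 4 (p 4) = 1/4" "F 4 (p 5) = 1/4" "F 4 (p 6) = 1/2" "F 4 (p 7) = 1/2" "F 4 (p 8) = 1/2" "F 4 (p 9) = 1/2" "F 4 (p 10) = 1/2" "F 4 (p 11) = 3/4" "F 4 (p 12) = 3/4" "F 4 (p 13) = 3/4" "F 4 (p 14) = 1"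
    using mo4 ends4 dd4 eps by linarith+

  have four: "{1..4::nat} = {1,2,3,4}" by auto
  have fa4: "\<And>P. (\<forall>i\<in>{1..4::nat}. P i) = (P 1 \<and> P 2 \<and> P 3 \<and> P 4)" unfolding four by auto
  have eg4: "\<And>X. eg v 4 X = Min {util v X 1 1, util v X 2 2, util v X 3 3, util v X 4 4}"
    unfolding eg_def four by simp
  have ivl: "\<And>a b c d :: real. a \<le> b \<Longrightarrow> c \<le> d \<Longrightarrow> {a<..<b} \<inter> {c<..<d} = {} \<Longrightarrow> a = b \<or> c = d \<or> b \<le> c \<or> d \<le> a"
  proof (rule ccontr)
    fix a b c d :: real
    assume h: "a \<le> b" "c \<le> d" "{a<..<b} \<inter> {c<..<d} = {}" "\<not> (a = b \<or> c = d \<or> b \<le> c \<or> d \<le> a)"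
    define t where "t = max a c / 2 + min b d / 2"
    have "t \<in> {a<..<b} \<inter> {c<..<d}" using h(1,2,4) unfolding t_def by (auto simp: max_def min_def)
    then show False using h(3) by blast
  qed
  have bound: "\<And>x. complete_division 4 x \<Longrightarrow> envy_free v 4 x \<Longrightarrow> eg v 4 x \<le> 1/4 \<or> eg v 4 x \<le> \<epsilon>"
  proof -
    fix x assume cd: "complete_division 4 x" and efx: "envy_free v 4 x"
    from cd have dv: "division 4 x" and cv: "(\<Union>i\<in>{1..4}. closure (x i)) = {0..1}"
      unfolding complete_division_def by auto
    from dv have "\<forall>i\<in>{1..4}. \<exists>a b. 0 \<le> a \<and> a \<le> b \<and> b \<le> 1 \<and> x i = {a<..<b}"
      unfolding division_def by auto
    then obtain a b where abx: "\<forall>i\<in>{1..4}. 0 \<le> a i \<and> a i \<le> b i \<and> b i \<le> 1 \<and> x i = {a i<..<b i}"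
      by metis
    have ab: "\<And>j. j \<in> {1..4} \<Longrightarrow> 0 \<le> a j \<and> a j \<le> b j \<and> b j \<le> 1" using abx by auto
    have xe: "\<And>j. j \<in> {1..4} \<Longrightarrow> x j = {a j<..<b j}" using abx by auto
    have U: "\<And>i j. i \<in> {1..4} \<Longrightarrow> j \<in> {1..4} \<Longrightarrow> util v x i j = F i (b j) - F i (a j)"
      unfolding util_def using xe ab meas by auto
    have disj: "\<And>j k. j \<in> {1..4} \<Longrightarrow> k \<in> {1..4} \<Longrightarrow> j \<noteq> k \<Longrightarrow>
                 a j = b j \<or> a k = b k \<or> b j \<le> a k \<or> b k \<le> a j"
    proof -
      fix j k :: nat assume h: "j \<in> {1..4}" "k \<in> {1..4}" "j \<noteq> k"
      then have "x j \<inter> x k = {}" using dv unfolding division_def by auto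
      then show "a j = b j \<or> a k = b k \<or> b j \<le> a k \<or> b k \<le> a j"
        using ivl[of "a j" "b j" "a k" "b k"] ab[OF h(1)] ab[OF h(2)] xe[OF h(1)] xe[OF h(2)] by auto
    qed
    have cov: "\<And>t. 0 \<le> t \<Longrightarrow> t \<le> 1 \<Longrightarrow> \<exists>j\<in>{1..4}. a j < b j \<and> a j \<le> t \<and> t \<le> b j"
    proof -
      fix t :: real assume "0 \<le> t" "t \<le> 1"
      then have "t \<in> (\<Union>i\<in>{1..4}. closure (x i))" using cv by auto
      then obtain j where j: "j \<in> {1..4}" "t \<in> closure {a j<..<b j}" using xe by auto
      have "a j < b j"
      proof (rule ccontr)
        assume "\<not> a j < b j"
        then have "{a j<..<b j} = {}" by auto
        then show False using j(2) by simp
      qed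
      then show "\<exists>j\<in>{1..4}. a j < b j \<and> a j \<le> t \<and> t \<le> b j" using j by auto
    qed
    have ef: "\<And>i j. i \<in> {1..4} \<Longrightarrow> j \<in> {1..4} \<Longrightarrow> F i (b j) - F i (a j) \<le> F i (b i) - F i (a i)"
      using efx U unfolding envy_free_def by fastforce
    show "eg v 4 x \<le> 1/4 \<or> eg v 4 x \<le> \<epsilon>"
    proof (rule ccontr)
      assume "\<not> (eg v 4 x \<le> 1/4 \<or> eg v 4 x \<le> \<epsilon>)"
      then have gt: "1/4 < eg v 4 x" "\<epsilon> < eg v 4 x" by auto
      have mle: "\<And>i. i \<in> {1..4} \<Longrightarrow> eg v 4 x \<le> util v x i i"
        unfolding eg_def by (rule Min_le) auto
      have own: "\<And>i. i \<in> {1..4} \<Longrightarrow> 1/4 < util v x i i \<and> \<epsilon> < util v x i i"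
        using gt mle by fastforce
      have own1: "\<And>i. i \<in> {1..4} \<Longrightarrow> F i (b i) - F i (a i) > 1/4" using own U by fastforce
      have own2: "\<And>i. i \<in> {1..4} \<Longrightarrow> F i (b i) - F i (a i) > \<epsilon>" using own U by fastforce
      show False
        by (rule core[OF eps tab1 tab2 tab3 tab4 p0 p14 pp mono ab disj cov ef own1 own2])
    qed
  qed
  define y' where "y' = (\<lambda>j::nat. if j = 1 then {p 1<..<p 4} else if j = 2 then {p 5<..<p 9} else if j = 3 then {p 4<..<p 5} else {p 9<..<p 14})"
  have yp: "y' 1 = {p 1<..<p 4}" "y' 2 = {p 5<..<p 9}" "y' 3 = {p 4<..<p 5}" "y' 4 = {p 9<..<p 14}" unfolding y'_def by auto
  have Uy_1_1: "util v y 1 1 = F 1 (p 4) - F 1 (p 0)"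
    unfolding util_def y(1) by (rule m1) (fact pr pa)+
  have Uy_1_2: "util v y 1 2 = F 1 (p 9) - F 1 (p 5)"
    unfolding util_def y(2) by (rule m1) (fact pr pa)+
  have Uy_1_3: "util v y 1 3 = F 1 (p 10) - F 1 (p 9)"
    unfolding util_def y(3) by (rule m1) (fact pr pa)+
  have Uy_1_4: "util v y 1 4 = F 1 (p 14) - F 1 (p 10)"
    unfolding util_def y(4) by (rule m1) (fact pr pa)+
  have Uy_2_1: "util v y 2 1 = F 2 (p 4) - F 2 (p 0)"
    unfolding util_def y(1) by (rule m2) (fact pr pa)+
  have Uy_2_2: "util v y 2 2 = F 2 (p 9) - F 2 (p 5)"
    unfolding util_def y(2) by (rule m2) (fact pr pa)+
  have Uy_2_3: "util v y 2 3 = F 2 (p 10) - F 2 (p 9)"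
    unfolding util_def y(3) by (rule m2) (fact pr pa)+
  have Uy_2_4: "util v y 2 4 = F 2 (p 14) - F 2 (p 10)"
    unfolding util_def y(4) by (rule m2) (fact pr pa)+
  have Uy_3_1: "util v y 3 1 = F 3 (p 4) - F 3 (p 0)"
    unfolding util_def y(1) by (rule m3) (fact pr pa)+
  have Uy_3_2: "util v y 3 2 = F 3 (p 9) - F 3 (p 5)"
    unfolding util_def y(2) by (rule m3) (fact pr pa)+
  have Uy_3_3: "util v y 3 3 = F 3 (p 10) - F 3 (p 9)"
    unfolding util_def y(3) by (rule m3) (fact pr pa)+
  have Uy_3_4: "util v y 3 4 = F 3 (p 14) - F 3 (p 10)"
    unfolding util_def y(4) by (rule m3) (fact pr pa)+
  have Uy_4_1: "util v y 4 1 = F 4 (p 4) - F 4 (p 0)"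
    unfolding util_def y(1) by (rule m4) (fact pr pa)+
  have Uy_4_2: "util v y 4 2 = F 4 (p 9) - F 4 (p 5)"
    unfolding util_def y(2) by (rule m4) (fact pr pa)+
  have Uy_4_3: "util v y 4 3 = F 4 (p 10) - F 4 (p 9)"
    unfolding util_def y(3) by (rule m4) (fact pr pa)+
  have Uy_4_4: "util v y 4 4 = F 4 (p 14) - F 4 (p 10)"
    unfolding util_def y(4) by (rule m4) (fact pr pa)+
  note Uy = Uy_1_1 Uy_1_2 Uy_1_3 Uy_1_4 Uy_2_1 Uy_2_2 Uy_2_3 Uy_2_4 Uy_3_1 Uy_3_2 Uy_3_3 Uy_3_4 Uy_4_1 Uy_4_2 Uy_4_3 Uy_4_4
  have Uyp_1_1: "util v y' 1 1 = F 1 (p 4) - F 1 (p 1)"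
    unfolding util_def yp(1) by (rule m1) (fact pr pa)+
  have Uyp_1_2: "util v y' 1 2 = F 1 (p 9) - F 1 (p 5)"
    unfolding util_def yp(2) by (rule m1) (fact pr pa)+
  have Uyp_1_3: "util v y' 1 3 = F 1 (p 5) - F 1 (p 4)"
    unfolding util_def yp(3) by (rule m1) (fact pr pa)+
  have Uyp_1_4: "util v y' 1 4 = F 1 (p 14) - F 1 (p 9)"
    unfolding util_def yp(4) by (rule m1) (fact pr pa)+
  have Uyp_2_1: "util v y' 2 1 = F 2 (p 4) - F 2 (p 1)"
    unfolding util_def yp(1) by (rule m2) (fact pr pa)+
  have Uyp_2_2: "util v y' 2 2 = F 2 (p 9) - F 2 (p 5)"
    unfolding util_def yp(2) by (rule m2) (fact pr pa)+
  have Uyp_2_3: "util v y' 2 3 = F 2 (p 5) - F 2 (p 4)"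
    unfolding util_def yp(3) by (rule m2) (fact pr pa)+
  have Uyp_2_4: "util v y' 2 4 = F 2 (p 14) - F 2 (p 9)"
    unfolding util_def yp(4) by (rule m2) (fact pr pa)+
  have Uyp_3_1: "util v y' 3 1 = F 3 (p 4) - F 3 (p 1)"
    unfolding util_def yp(1) by (rule m3) (fact pr pa)+
  have Uyp_3_2: "util v y' 3 2 = F 3 (p 9) - F 3 (p 5)"
    unfolding util_def yp(2) by (rule m3) (fact pr pa)+
  have Uyp_3_3: "util v y' 3 3 = F 3 (p 5) - F 3 (p 4)"
    unfolding util_def yp(3) by (rule m3) (fact pr pa)+
  have Uyp_3_4: "util v y' 3 4 = F 3 (p 14) - F 3 (p 9)"
    unfolding util_def yp(4) by (rule m3) (fact pr pa)+
  have Uyp_4_1: "util v y' 4 1 = F 4 (p 4) - F 4 (p 1)"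
    unfolding util_def yp(1) by (rule m4) (fact pr pa)+
  have Uyp_4_2: "util v y' 4 2 = F 4 (p 9) - F 4 (p 5)"
    unfolding util_def yp(2) by (rule m4) (fact pr pa)+
  have Uyp_4_3: "util v y' 4 3 = F 4 (p 5) - F 4 (p 4)"
    unfolding util_def yp(3) by (rule m4) (fact pr pa)+
  have Uyp_4_4: "util v y' 4 4 = F 4 (p 14) - F 4 (p 9)"
    unfolding util_def yp(4) by (rule m4) (fact pr pa)+
  note Uyp = Uyp_1_1 Uyp_1_2 Uyp_1_3 Uyp_1_4 Uyp_2_1 Uyp_2_2 Uyp_2_3 Uyp_2_4 Uyp_3_1 Uyp_3_2 Uyp_3_3 Uyp_3_4 Uyp_4_1 Uyp_4_2 Uyp_4_3 Uyp_4_4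
  note tab = tab1 tab2 tab3 tab4
  have py: "partial_division 4 y"
    unfolding partial_division_def
  proof
    let ?s = "\<lambda>j::nat. if j = 1 then p 0 else if j = 2 then p 5 else if j = 3 then p 9 else p 10"
    let ?t = "\<lambda>j::nat. if j = 1 then p 4 else if j = 2 then p 9 else if j = 3 then p 10 else p 14"
    show "division 4 y"
    proof (rule div4[where s = ?s and t = ?t])
      fix j :: nat assume "j \<in> {1..4}"
      then have "j = 1 \<or> j = 2 \<or> j = 3 \<or> j = 4" by auto
      then show "y j = {?s j<..<?t j}" "0 \<le> ?s j \<and> ?s j \<le> ?t j \<and> ?t j \<le> 1" using y pa pr by auto
    next
      fix j k :: nat assume "j \<in> {1..4}" "k \<in> {1..4}" "j \<noteq> k"
      then have "j = 1 \<or> j = 2 \<or> j = 3 \<or> j = 4" "k = 1 \<or> k = 2 \<or> k = 3 \<or> k = 4" by auto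
      then show "?t j \<le> ?s k \<or> ?t k \<le> ?s j" using pa \<open>j \<noteq> k\<close> by auto
    qed
    show "\<not> complete_division 4 y"
    proof (rule notcomp[where u = "p 4 / 2 + p 5 / 2"])
      show "0 \<le> p 4 / 2 + p 5 / 2" "p 4 / 2 + p 5 / 2 \<le> 1" using pr by linarith+
      fix j :: nat assume "j \<in> {1..4}"
      then have "j = 1 \<or> j = 2 \<or> j = 3 \<or> j = 4" by auto
      moreover have "p 4 / 2 + p 5 / 2 > p 4" "p 4 / 2 + p 5 / 2 < p 5" using pl4 by linarith+
      moreover have "p 4 / 2 + p 5 / 2 \<notin> closure {p 0<..<p 4}" "p 4 / 2 + p 5 / 2 \<notin> closure {p 5<..<p 9}"
        "p 4 / 2 + p 5 / 2 \<notin> closure {p 9<..<p 10}" "p 4 / 2 + p 5 / 2 \<notin> closure {p 10<..<p 14}"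
        using pl4 pp by (intro notclos; linarith)+
      ultimately show "p 4 / 2 + p 5 / 2 \<notin> closure (y j)" using y by auto
    qed
  qed
  have py': "partial_division 4 y'"
    unfolding partial_division_def
  proof
    let ?s = "\<lambda>j::nat. if j = 1 then p 1 else if j = 2 then p 5 else if j = 3 then p 4 else p 9"
    let ?t = "\<lambda>j::nat. if j = 1 then p 4 else if j = 2 then p 9 else if j = 3 then p 5 else p 14"
    show "division 4 y'"
    proof (rule div4[where s = ?s and t = ?t])
      fix j :: nat assume "j \<in> {1..4}"
      then have "j = 1 \<or> j = 2 \<or> j = 3 \<or> j = 4" by auto
      then show "y' j = {?s j<..<?t j}" "0 \<le> ?s j \<and> ?s j \<le> ?t j \<and> ?t j \<le> 1" using yp pa pr by auto
    next
      fix j k :: nat assume "j \<in> {1..4}" "k \<in> {1..4}" "j \<noteq> k"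
      then have "j = 1 \<or> j = 2 \<or> j = 3 \<or> j = 4" "k = 1 \<or> k = 2 \<or> k = 3 \<or> k = 4" by auto
      then show "?t j \<le> ?s k \<or> ?t k \<le> ?s j" using pa \<open>j \<noteq> k\<close> by auto
    qed
    show "\<not> complete_division 4 y'"
    proof (rule notcomp[where u = "p 0 / 2 + p 1 / 2"])
      show "0 \<le> p 0 / 2 + p 1 / 2" "p 0 / 2 + p 1 / 2 \<le> 1" using pr by linarith+
      fix j :: nat assume "j \<in> {1..4}"
      then have "j = 1 \<or> j = 2 \<or> j = 3 \<or> j = 4" by auto
      moreover have "p 0 / 2 + p 1 / 2 < p 1" using pl0 by linarith
      moreover have "p 0 / 2 + p 1 / 2 \<notin> closure {p 1<..<p 4}" "p 0 / 2 + p 1 / 2 \<notin> closure {p 5<..<p 9}"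
        "p 0 / 2 + p 1 / 2 \<notin> closure {p 4<..<p 5}" "p 0 / 2 + p 1 / 2 \<notin> closure {p 9<..<p 14}"
        using pl0 pp by (intro notclos; linarith)+
      ultimately show "p 0 / 2 + p 1 / 2 \<notin> closure (y' j)" using yp by auto
    qed
  qed
  have efy: "envy_free v 4 y"
    unfolding envy_free_def fa4 using Uy tab eps by simp
  have egy: "eg v 4 y = (1-\<epsilon>)/3"
    unfolding eg4 using Uy tab eps by (intro Min_eqI) auto
  have efy': "envy_free v 4 y'" if "1/4 \<le> \<epsilon>"
    unfolding envy_free_def fa4 using Uyp tab eps that by simp
  have egy': "eg v 4 y' = \<epsilon>"
    unfolding eg4 using Uyp tab eps by (intro Min_eqI) auto
  have para: "egal_dumping_paradox v 4 (4*(1-\<epsilon>)/3)"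
    unfolding egal_dumping_paradox_def
  proof (cases "\<epsilon> < 1/4")
    case True
    show "\<exists>y. partial_division 4 y \<and> envy_free v 4 y \<and>
        (\<forall>x. complete_division 4 x \<and> envy_free v 4 x \<longrightarrow> 4*(1-\<epsilon>)/3 * eg v 4 x \<le> eg v 4 y)"
    proof (intro exI conjI allI impI)
      show "partial_division 4 y" "envy_free v 4 y" by (rule py, rule efy)
      fix x assume "complete_division 4 x \<and> envy_free v 4 x"
      then have "eg v 4 x \<le> 1/4" using bound True by fastforce
      then have "4*(1-\<epsilon>)/3 * eg v 4 x \<le> 4*(1-\<epsilon>)/3 * (1/4)"
        using eps by (intro mult_left_mono) auto
      moreover have "4*(1-\<epsilon>)/3 * (1/4) = (1-\<epsilon>)/3" by simp
      ultimately show "4*(1-\<epsilon>)/3 * eg v 4 x \<le> eg v 4 y" using egy by linarith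
    qed
  next
    case False
    show "\<exists>y. partial_division 4 y \<and> envy_free v 4 y \<and>
        (\<forall>x. complete_division 4 x \<and> envy_free v 4 x \<longrightarrow> 4*(1-\<epsilon>)/3 * eg v 4 x \<le> eg v 4 y)"
    proof (intro exI conjI allI impI)
      show "partial_division 4 y'" "envy_free v 4 y'" using py' efy' False by auto
      fix x assume "complete_division 4 x \<and> envy_free v 4 x"
      then have "eg v 4 x \<le> \<epsilon>" using bound False by fastforce
      then have "4*(1-\<epsilon>)/3 * eg v 4 x \<le> 4*(1-\<epsilon>)/3 * \<epsilon>"
        using eps by (intro mult_left_mono) auto
      also have "\<dots> \<le> 1 * \<epsilon>" using eps False by (intro mult_right_mono) auto
      finally show "4*(1-\<epsilon>)/3 * eg v 4 x \<le> eg v 4 y'" using egy' by simp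
    qed
  qed
  show ?thesis using py efy egy para by blast
qed


end
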